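(* Let $2\le R\le K$, $\epsilon\in(0,1)$, and let $\mathcal{Y}_1,\ldots,\mathcal{Y}_m\subseteq[K]$ with $|\mathcal{Y}_i|=R$ for all $i$. Let $Z$ be uniform on $[K]$ and let $Y=(Y_1,\ldots,Y_m)$ be such that, conditionally on $Z=k$, the $Y_i$ are independent, with $Y_i=k$ almost surely if $k\in\mathcal{Y}_i$ and $Y_i$ uniform on $\mathcal{Y}_i$ if $k\notin\mathcal{Y}_i$. If some decoder $g:\mathcal{Y}_1\times\cdots\times\mathcal{Y}_m\to[K]$ satisfies $\mathbb{P}(g(Y)\ne Z)\le\epsilon$, then $$m\ \ge\ \left\lceil \frac{K}{R}\cdot\frac{(1-\epsilon)\log K-\log 2}{\log R}\right\rceil.$$
   Context: $[K]=\{1,\ldots,K\}$; $\log$ denotes the natural logarithm. *)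

theory Defs
  imports "HOL-Probability.Probability"
begin

definition obs_pmf :: "nat set \<Rightarrow> nat \<Rightarrow> nat pmf" where
  "obs_pmf S k = (if k \<in> S then return_pmf k else pmf_of_set S)"

text \<open>Y is a function on {..<m}
  (value undefined outside), i.e. an element of PiE {..<m} Ys.\<close>
definition joint_pmf :: "nat \<Rightarrow> nat \<Rightarrow> (nat \<Rightarrow> nat set) \<Rightarrow> (nat \<times> (nat \<Rightarrow> nat)) pmf" where
  "joint_pmf K m Ys =
     pmf_of_set {1..K} \<bind> (\<lambda>k.
       Pi_pmf {..<m} undefined (\<lambda>i. obs_pmf (Ys i) k) \<bind> (\<lambda>y.
         return_pmf (k, y)))"

definition err_prob :: "nat \<Rightarrow> nat \<Rightarrow> (nat \<Rightarrow> nat set) \<Rightarrow> ((nat \<Rightarrow> nat) \<Rightarrow> nat) \<Rightarrow> real" where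
  "err_prob K m Ys g = measure_pmf.prob (joint_pmf K m Ys) {(k, y). g y \<noteq> k}"

end

theory Submission
  imports Defs
begin

lemma pointwise_ls:
  fixes p S n q :: real
  assumes "p \<ge> 0" "S > 0" "n > 0" "q > 0"
  shows "p * ln (p / q) \<ge> p * ln (S / (q * n)) + p - S / n"
proof (cases "p = 0")
  case True then show ?thesis using assms by simp
next
  case False
  hence p: "p > 0" using assms by simp
  have "ln (S / (p * n)) \<le> S / (p * n) - 1" using p assms by (intro ln_le_minus_one) simp
  moreover have "ln (p / q) = ln (S / (q * n)) - ln (S / (p * n))"
    using p assms by (simp add: ln_div ln_mult)
  ultimately have "ln (p / q) \<ge> ln (S / (q * n)) + 1 - S / (p * n)" by linarith
  hence "p * ln (p / q) \<ge> p * (ln (S / (q * n)) + 1 - S / (p * n))"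
    using p by (intro mult_left_mono) auto
  also have "p * (ln (S / (q * n)) + 1 - S / (p * n)) = p * ln (S / (q * n)) + p - S / n"
    using p assms by (simp add: field_simps)
  finally show ?thesis .
qed

lemma logsum:
  fixes P :: "'a \<Rightarrow> real"
  assumes "finite A" "A \<noteq> {}" "\<forall>x\<in>A. P x \<ge> 0" "q > 0"
  shows "(\<Sum>x\<in>A. P x * ln (P x / q)) \<ge> (\<Sum>x\<in>A. P x) * ln ((\<Sum>x\<in>A. P x) / (q * card A))"
proof (cases "(\<Sum>x\<in>A. P x) = 0")
  case True
  hence "\<forall>x\<in>A. P x = 0" using assms sum_nonneg_eq_0_iff by blast
  then show ?thesis by (simp add: True)
next
  case False
  define S where "S = (\<Sum>x\<in>A. P x)"
  have S: "S > 0" using False assms unfolding S_def by (metis less_eq_real_def sum_nonneg)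
  have n: "real (card A) > 0" using assms by (simp add: card_gt_0_iff)
  have "(\<Sum>x\<in>A. P x * ln (P x / q)) \<ge> (\<Sum>x\<in>A. P x * ln (S / (q * card A)) + P x - S / card A)"
    by (intro sum_mono pointwise_ls) (use assms S n in auto)
  also have "(\<Sum>x\<in>A. P x * ln (S / (q * card A)) + P x - S / card A) = S * ln (S / (q * card A))"
    using n by (simp add: sum.distrib sum_subtractf sum_distrib_right[symmetric] S_def)
  finally show ?thesis unfolding S_def .
qed

lemma binent:
  fixes c :: real
  assumes "0 \<le> c" "c \<le> 1"
  shows "c * ln c + (1 - c) * ln (1 - c) \<ge> - ln 2"
proof -
  have "(\<Sum>x\<in>{True,False}. (if x then c else 1 - c) * ln ((if x then c else 1 - c) / (1/2)))
        \<ge> (\<Sum>x\<in>{True,False}. (if x then c else 1 - c)) * ln ((\<Sum>x\<in>{True,False}. (if x then c else 1 - c)) / ((1/2) * card {True,False}))"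
    by (rule logsum) (use assms in auto)
  hence h: "c * ln (2*c) + (1-c) * ln (2*(1-c)) \<ge> 0" by (simp add: algebra_simps)
  show ?thesis
  proof (cases "c = 0 \<or> c = 1")
    case True then show ?thesis by auto
  next
    case False
    hence "c > 0" "1 - c > 0" using assms by auto
    hence "ln (2*c) = ln 2 + ln c" "ln (2*(1-c)) = ln 2 + ln (1-c)" using ln_mult[of 2 "1-c"] ln_mult[of 2 c] by simp_all
    then show ?thesis using h by (simp add: algebra_simps)
  qed
qed

definition wk :: "nat \<Rightarrow> (nat \<Rightarrow> nat set) \<Rightarrow> nat \<Rightarrow> (nat \<Rightarrow> nat) pmf" where
  "wk m Ys k = Pi_pmf {..<m} undefined (\<lambda>i. obs_pmf (Ys i) k)"

lemma pmf_joint: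
  assumes "k \<in> {1..K}"
  shows "pmf (joint_pmf K m Ys) (k, y) = pmf (wk m Ys k) y / real K"
proof -
  have K: "{1..K} \<noteq> {}" "finite {1..K}" using assms by auto
  have e: "pmf (wk m Ys k' \<bind> (\<lambda>y. return_pmf (k', y))) (k, y) = (if k' = k then pmf (wk m Ys k) y else 0)" for k'
  proof -
    have m: "wk m Ys k' \<bind> (\<lambda>y. return_pmf (k', y)) = map_pmf (Pair k') (wk m Ys k')"
      by (simp add: map_pmf_def)
    show ?thesis
    proof (cases "k' = k")
      case True
      then show ?thesis unfolding m by (simp add: pmf_map_inj' inj_on_def)
    next
      case False
      then show ?thesis unfolding m by (subst pmf_map_outside) auto
    qed
  qed
  have "pmf (joint_pmf K m Ys) (k, y) = measure_pmf.expectation (pmf_of_set {1..K})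
      (\<lambda>k'. pmf (wk m Ys k' \<bind> (\<lambda>y. return_pmf (k', y))) (k, y))"
    unfolding joint_pmf_def wk_def by (rule pmf_bind)
  also have "\<dots> = (\<Sum>k'\<in>{1..K}. pmf (wk m Ys k' \<bind> (\<lambda>y. return_pmf (k', y))) (k, y)) / real K"
    using integral_pmf_of_set[OF K] by simp
  also have "\<dots> = (\<Sum>k'\<in>{1..K}. (if k' = k then pmf (wk m Ys k) y else 0)) / real K"
    unfolding e ..
  also have "\<dots> = pmf (wk m Ys k) y / real K" using assms by simp
  finally show ?thesis .
qed

lemma set_wk:
  assumes "\<forall>i<m. finite (Ys i) \<and> Ys i \<noteq> {}"
  shows "set_pmf (wk m Ys k) \<subseteq> PiE {..<m} Ys"
proof -
  have s: "set_pmf (obs_pmf (Ys i) k) \<subseteq> Ys i" if "i < m" for i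
    using assms that by (auto simp: obs_pmf_def)
  show ?thesis unfolding wk_def
    using set_Pi_pmf_subset'[of "{..<m}" undefined "\<lambda>i. obs_pmf (Ys i) k"] s
    by (auto simp: PiE_dflt_def PiE_def extensional_def)
qed

lemma sum_wk:
  assumes "\<forall>i<m. finite (Ys i) \<and> Ys i \<noteq> {}"
  shows "(\<Sum>y\<in>PiE {..<m} Ys. pmf (wk m Ys k) y) = 1"
  by (rule sum_pmf_eq_1) (use assms set_wk[OF assms] in \<open>auto intro: finite_PiE\<close>)

lemma wk_bound:
  assumes "\<forall>i<m. finite (Ys i) \<and> card (Ys i) = R" "R \<ge> 1" "y \<in> PiE {..<m} Ys"
  shows "pmf (wk m Ys k) y * real R ^ m \<le> (\<Prod>i<m. if k \<in> Ys i then real R else 1)"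
proof -
  have "pmf (wk m Ys k) y = (\<Prod>i<m. pmf (obs_pmf (Ys i) k) (y i))"
    unfolding wk_def using assms(3) by (subst pmf_Pi) (auto simp: PiE_def extensional_def)
  hence "pmf (wk m Ys k) y * real R ^ m = (\<Prod>i<m. pmf (obs_pmf (Ys i) k) (y i) * real R)"
    by (simp add: prod.distrib)
  also have "\<dots> \<le> (\<Prod>i<m. if k \<in> Ys i then real R else 1)"
  proof (rule prod_mono)
    fix i assume i: "i \<in> {..<m}"
    have "pmf (obs_pmf (Ys i) k) (y i) * real R \<le> (if k \<in> Ys i then real R else 1)"
    proof (cases "k \<in> Ys i")
      case True then show ?thesis using pmf_le_1[of "obs_pmf (Ys i) k" "y i"] assms
        by (simp add: mult_le_cancel_right2 del: pmf_le_1)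
    next
      case False
      have ne: "Ys i \<noteq> {}" "finite (Ys i)" using assms i by auto
      show ?thesis using False ne assms i
        by (auto simp: obs_pmf_def pmf_of_set[OF ne] indicator_def)
    qed
    then show "0 \<le> pmf (obs_pmf (Ys i) k) (y i) * real R \<and> pmf (obs_pmf (Ys i) k) (y i) * real R \<le> (if k \<in> Ys i then real R else 1)" by simp
  qed
  finally show ?thesis .
qed

theorem theorem4:
  fixes K R m :: nat and \<epsilon> :: real
    and Ys :: "nat \<Rightarrow> nat set" and g :: "(nat \<Rightarrow> nat) \<Rightarrow> nat"
  assumes "2 \<le> R" and "R \<le> K"
    and "0 < \<epsilon>" and "\<epsilon> < 1"
    and "\<forall>i<m. Ys i \<subseteq> {1..K} \<and> card (Ys i) = R"
    and "\<forall>y \<in> PiE {..<m} Ys. g y \<in> {1..K}"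
    and "err_prob K m Ys g \<le> \<epsilon>"
  shows "int m \<ge> \<lceil>(real K / real R) * (((1 - \<epsilon>) * ln (real K) - ln 2) / ln (real R))\<rceil>"
proof -
  note hR = assms(1) and hRK = assms(2) and hYs = assms(5) and hg = assms(6) and herr = assms(7)
  have fin: "\<forall>i<m. finite (Ys i) \<and> Ys i \<noteq> {}"
    using hYs hR by (metis card.empty card.infinite not_numeral_le_zero)
  have fin2: "\<forall>i<m. finite (Ys i) \<and> card (Ys i) = R" using hYs fin by blast
  define Y where "Y = PiE {..<m} Ys"
  define N where "N = card Y"
  define w where "w k y = pmf (wk m Ys k) y" for k y
  define X where "X = {1..K} \<times> Y"
  define P where "P x = w (fst x) (snd x) / real K" for x
  define q where "q = 1 / (real K * real N)"
  define L where "L k = (\<Sum>i<m. if k \<in> Ys i then ln (real R) else 0)" for k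
  define f where "f x = P x * ln (P x / q)" for x
  have finY: "finite Y" unfolding Y_def using fin by (auto intro: finite_PiE)
  have NR: "N = R ^ m" unfolding N_def Y_def using fin2 by (simp add: card_PiE)
  have Npos: "real N > 0" using NR hR by simp
  have Kpos: "real K > 0" using hR hRK by simp
  have K2: "real K \<ge> 2" using hR hRK by simp
  have qpos: "q > 0" unfolding q_def using Npos Kpos by simp
  have finX: "finite X" unfolding X_def using finY by simp
  have wnn: "w k y \<ge> 0" for k y unfolding w_def by simp
  have Pnn: "P x \<ge> 0" for x unfolding P_def using wnn Kpos by simp
  have sumw: "(\<Sum>y\<in>Y. w k y) = 1" for k unfolding w_def Y_def by (rule sum_wk[OF fin])
  have Pq: "P x / q = w (fst x) (snd x) * real N" for x
    unfolding P_def q_def using Kpos Npos by (simp add: field_simps)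
  have term_le: "f (k, y) \<le> w k y / real K * L k" if "y \<in> Y" for k y
  proof (cases "w k y = 0")
    case True then show ?thesis unfolding f_def P_def by simp
  next
    case False
    hence wpos: "w k y > 0" using wnn[of k y] by simp
    have pos: "(\<Prod>i<m. if k \<in> Ys i then real R else 1) > 0" using hR by (intro prod_pos) auto
    have "w k y * real N \<le> (\<Prod>i<m. if k \<in> Ys i then real R else 1)"
      using wk_bound[OF fin2 _ that[unfolded Y_def], of k] hR unfolding w_def NR by simp
    hence "ln (w k y * real N) \<le> ln (\<Prod>i<m. if k \<in> Ys i then real R else 1)"
      using wpos Npos pos by (subst ln_le_cancel_iff) auto
    also have "\<dots> = L k" unfolding L_def using hR by (subst ln_prod) (auto intro: sum.cong)
    finally have "ln (w k y * real N) \<le> L k" .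
    then show ?thesis unfolding f_def Pq using wpos Kpos
      by (simp add: P_def divide_right_mono mult_left_mono)
  qed
  have sumL: "(\<Sum>k\<in>{1..K}. L k) = real m * real R * ln (real R)"
  proof -
    have "(\<Sum>k\<in>{1..K}. L k) = (\<Sum>i<m. \<Sum>k\<in>{1..K}. if k \<in> Ys i then ln (real R) else 0)"
      unfolding L_def by (rule sum.swap)
    also have "\<dots> = (\<Sum>i<m. real R * ln (real R))"
    proof (rule sum.cong)
      fix i assume "i \<in> {..<m}"
      hence "{1..K} \<inter> Ys i = Ys i" "card (Ys i) = R" using hYs by auto
      then show "(\<Sum>k\<in>{1..K}. if k \<in> Ys i then ln (real R) else 0) = real R * ln (real R)"
        by (simp add: sum.If_cases)
    qed simp
    finally show ?thesis by simp
  qed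
  have upper: "(\<Sum>x\<in>X. f x) \<le> real m * real R * ln (real R) / real K"
  proof -
    have "(\<Sum>x\<in>X. f x) = (\<Sum>k\<in>{1..K}. \<Sum>y\<in>Y. f (k, y))"
      unfolding X_def by (simp add: sum.cartesian_product)
    also have "\<dots> \<le> (\<Sum>k\<in>{1..K}. \<Sum>y\<in>Y. w k y / real K * L k)"
      by (intro sum_mono term_le)
    also have "\<dots> = (\<Sum>k\<in>{1..K}. L k / real K)"
      by (simp add: sum_distrib_right[symmetric] sum_divide_distrib[symmetric] sumw)
    also have "\<dots> = real m * real R * ln (real R) / real K"
      using sumL by (simp add: sum_divide_distrib[symmetric])
    finally show ?thesis .
  qed
  define A where "A = (\<lambda>y. (g y, y)) ` Y"
  have AX: "A \<subseteq> X" unfolding A_def X_def Y_def using hg by auto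
  have cardA: "card A = N" unfolding A_def N_def by (rule card_image) (auto simp: inj_on_def)
  have cardX: "card X = K * N" unfolding X_def N_def by (simp add: card_cartesian_product)
  have cardXA: "real (card (X - A)) = (real K - 1) * real N"
    using card_Diff_subset[OF finite_subset[OF AX finX] AX] cardA cardX hR hRK
    by (simp add: algebra_simps of_nat_diff)
  have sumP: "(\<Sum>x\<in>X. P x) = 1"
  proof -
    have "(\<Sum>x\<in>X. P x) = (\<Sum>k\<in>{1..K}. \<Sum>y\<in>Y. w k y / real K)"
      unfolding X_def P_def by (simp add: sum.cartesian_product split_beta')
    also have "\<dots> = (\<Sum>k\<in>{1..K}. 1 / real K)"
      by (simp add: sum_divide_distrib[symmetric] sumw)
    finally show ?thesis using Kpos by simp
  qed
  define c where "c = (\<Sum>x\<in>A. P x)"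
  have sumXA: "(\<Sum>x\<in>X - A. P x) = 1 - c"
    unfolding c_def using sum.subset_diff[OF AX finX, of P] sumP by simp
  have "(\<Sum>x\<in>X - A. P x) = measure_pmf.prob (joint_pmf K m Ys) (X - A)"
  proof -
    have "measure_pmf.prob (joint_pmf K m Ys) (X - A) = (\<Sum>x\<in>X - A. pmf (joint_pmf K m Ys) x)"
      using finX by (simp add: measure_measure_pmf_finite)
    also have "\<dots> = (\<Sum>x\<in>X - A. P x)"
      by (rule sum.cong) (auto simp: X_def P_def w_def pmf_joint)
    finally show ?thesis by simp
  qed
  also have "\<dots> \<le> measure_pmf.prob (joint_pmf K m Ys) {(k, y). g y \<noteq> k}"
    by (rule measure_pmf.finite_measure_mono) (auto simp: A_def X_def)
  also have "\<dots> \<le> \<epsilon>" using herr unfolding err_prob_def .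
  finally have ce: "1 - c \<le> \<epsilon>" using sumXA by simp
  have c1: "c \<le> 1" using sumXA sum_nonneg[of "X - A" P] Pnn by simp
  have cpos: "c > 0" using ce assms(4) by simp
  have lA: "(\<Sum>x\<in>A. f x) \<ge> c * ln (c * real K)"
  proof -
    have ne: "A \<noteq> {}" using cardA Npos by auto
    have "(\<Sum>x\<in>A. f x) \<ge> c * ln (c / (q * card A))"
      unfolding f_def c_def by (rule logsum) (use finite_subset[OF AX finX] ne Pnn qpos in auto)
    moreover have "c / (q * card A) = c * real K" using cardA Npos Kpos unfolding q_def by simp
    ultimately show ?thesis by simp
  qed
  have lXA: "(\<Sum>x\<in>X - A. f x) \<ge> (1 - c) * ln (1 - c)"
  proof -
    have ne: "X - A \<noteq> {}" using cardXA K2 Npos by (metis card.empty mult_pos_pos of_nat_0 diff_gt_0_iff_gt less_irrefl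
        less_le_trans one_less_numeral_iff semiring_norm(76))
    have "(\<Sum>x\<in>X - A. f x) \<ge> (1 - c) * ln ((1 - c) / (q * card (X - A)))"
      unfolding f_def sumXA[symmetric] by (rule logsum) (use finX ne Pnn qpos in auto)
    moreover have "(1 - c) * ln ((1 - c) / (q * card (X - A))) \<ge> (1 - c) * ln (1 - c)"
    proof (cases "c = 1")
      case False
      hence c1': "1 - c > 0" using c1 by simp
      have "(1 - c) / (q * card (X - A)) = (1 - c) * (real K / (real K - 1))"
        unfolding cardXA q_def using Npos K2 by (simp add: field_simps)
      also have "\<dots> \<ge> 1 - c" using c1' K2 by (simp add: field_simps)
      finally have "ln (1 - c) \<le> ln ((1 - c) / (q * card (X - A)))" using c1' by simp
      then show ?thesis using c1' by (simp add: mult_left_mono)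
    qed simp
    ultimately show ?thesis by linarith
  qed
  have "(\<Sum>x\<in>X. f x) = (\<Sum>x\<in>X - A. f x) + (\<Sum>x\<in>A. f x)"
    using sum.subset_diff[OF AX finX] by simp
  hence "(\<Sum>x\<in>X. f x) \<ge> c * ln c + c * ln (real K) + (1 - c) * ln (1 - c)"
    using lA lXA cpos Kpos by (simp add: ln_mult algebra_simps)
  moreover have "c * ln c + (1 - c) * ln (1 - c) \<ge> - ln 2" using binent cpos c1 by simp
  moreover have "c * ln (real K) \<ge> (1 - \<epsilon>) * ln (real K)"
    using ce K2 by (intro mult_right_mono) auto
  ultimately have key: "(1 - \<epsilon>) * ln (real K) - ln 2 \<le> real m * real R * ln (real R) / real K"
    using upper by linarith
  have lnR: "ln (real R) > 0" using hR by simp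
  have Rpos: "real R > 0" using hR by simp
  have "(real K / real R) * (((1 - \<epsilon>) * ln (real K) - ln 2) / ln (real R))
        \<le> (real K / real R) * ((real m * real R * ln (real R) / real K) / ln (real R))"
    using key lnR Kpos Rpos by (intro mult_left_mono divide_right_mono) auto
  also have "\<dots> = real m" using lnR Kpos Rpos by (simp add: field_simps)
  finally show ?thesis by (simp add: ceiling_le_iff)
qed

end
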